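(* Assume $\kappa^\infty_i\ge0$ for all $i\ge2$, and let $\xi<1$ satisfy $\alpha\xi>\alpha_{\rm s}$. Let $I^*=[-a^*,a^*]$ be such that $h^\Sigma(\mathcal X_{I^*})\subseteq\mathcal X_{I^*}$. Then for all $\boldsymbol x,\boldsymbol y\in\mathcal X_{I^*}$, $$\|h^\Sigma(\boldsymbol x)-h^\Sigma(\boldsymbol y)\|_\xi\le R'\Big(\frac1{\xi\alpha}\Big)\Big(\frac1{\xi\alpha}\Big)^2\|\boldsymbol x-\boldsymbol y\|_\xi,\qquad\text{and}\qquad R'\Big(\frac1{\xi\alpha}\Big)\Big(\frac1{\xi\alpha}\Big)^2<1.$$
   Context: $\Lambda$ compactly supported with support supremum $b$; $G(z)=\mathbb E\{(z-\Lambda)^{-1}\}$, $\alpha_{\rm s}=1/G(b^+)$; $\kappa^\infty_k$ the free cumulants of $\Lambda$; $R'(z)=\sum_{i\ge0}(i+1)\kappa^\infty_{i+2}z^i$ (convergent for $0\le z<1/\alpha_{\rm s}$); $\rho_\alpha^2=-1/(\alpha^2G'(G^{-1}(1/\alpha)))$. Arrays $\boldsymbol x=(x_{s,t})_{s,t\le0}$ carry the norm $\|\boldsymbol x\|_\xi=\sup_{s,t\le0}\xi^{\max(|s|,|t|)}|x_{s,t}|$; $\mathcal X_I=\{\boldsymbol x:x_{s,t}\in I\ \forall s,t\}$. $h^\Sigma_{s,t}(\boldsymbol x)=\sum_{j,k\ge0}\kappa^\infty_{j+k+2}(1/\alpha)^{j+k+2}\big((\alpha\rho_\alpha)^2+x_{s-j,t-k}\big)$.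 *)

theory Defs
  imports "HOL-Probability.Probability" "HOL-Computational_Algebra.Formal_Power_Series"
begin

text \<open>The law of Lambda is a Borel probability measure mu on the reals.\<close>

definition msupp :: "real measure \<Rightarrow> real set" where
  "msupp \<mu> = {x. \<forall>e>0. emeasure \<mu> (ball x e) > 0}"

definition supp_sup :: "real measure \<Rightarrow> real" where
  "supp_sup \<mu> = Sup (msupp \<mu>)"

definition stieltjes :: "real measure \<Rightarrow> real \<Rightarrow> real" where
  "stieltjes \<mu> z = (\<integral>x. 1 / (z - x) \<partial>\<mu>)"

text \<open>G(b+) as an extended real (possibly infinite), alpha_s = 1/G(b+) with 1/infinity = 0.\<close>
definition G_bplus :: "real measure \<Rightarrow> ereal" where
  "G_bplus \<mu> = Lim (at_right (supp_sup \<mu>)) (\<lambda>z. ereal (stieltjes \<mu> z))"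

definition alpha_s :: "real measure \<Rightarrow> real" where
  "alpha_s \<mu> = real_of_ereal (inverse (G_bplus \<mu>))"

definition moment :: "real measure \<Rightarrow> nat \<Rightarrow> real" where
  "moment \<mu> n = (\<integral>x. x ^ n \<partial>\<mu>)"

definition moment_fps :: "real measure \<Rightarrow> real fps" where
  "moment_fps \<mu> = Abs_fps (moment \<mu>)"

text \<open>Free cumulants via the moment--free-cumulant relation
  m_n = sum_{s=1}^n kappa_s sum_{i_1+...+i_s = n-s} m_{i_1}...m_{i_s}.\<close>
definition free_cumulant :: "real measure \<Rightarrow> nat \<Rightarrow> real" where
  "free_cumulant \<mu> = (THE \<kappa>. \<kappa> 0 = 0 \<and>
      (\<forall>n\<ge>1. moment \<mu> n = (\<Sum>s=1..n. \<kappa> s * fps_nth (moment_fps \<mu> ^ s) (n - s))))"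

definition Rprime :: "real measure \<Rightarrow> real \<Rightarrow> real" where
  "Rprime \<mu> z = (\<Sum>i. real (i + 1) * free_cumulant \<mu> (i + 2) * z ^ i)"

definition G_inv :: "real measure \<Rightarrow> real \<Rightarrow> real" where
  "G_inv \<mu> y = (THE z. z > supp_sup \<mu> \<and> stieltjes \<mu> z = y)"

definition rho_sq :: "real measure \<Rightarrow> real \<Rightarrow> real" where
  "rho_sq \<mu> \<alpha> = - 1 / (\<alpha>\<^sup>2 * deriv (stieltjes \<mu>) (G_inv \<mu> (1 / \<alpha>)))"

text \<open>Arrays x = (x_{s,t})_{s,t \<le> 0} as functions int => int => real (values at
  positive indices are irrelevant).\<close>
definition hSigma :: "real measure \<Rightarrow> real \<Rightarrow> (int \<Rightarrow> int \<Rightarrow> real) \<Rightarrow> int \<Rightarrow> int \<Rightarrow> real" where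
  "hSigma \<mu> \<alpha> x = (\<lambda>s t. \<Sum>\<^sub>\<infinity>(j, k) \<in> (UNIV :: (nat \<times> nat) set).
      free_cumulant \<mu> (j + k + 2) * (1 / \<alpha>) ^ (j + k + 2) *
      (\<alpha>\<^sup>2 * rho_sq \<mu> \<alpha> + x (s - int j) (t - int k)))"

definition xnorm :: "real \<Rightarrow> (int \<Rightarrow> int \<Rightarrow> real) \<Rightarrow> real" where
  "xnorm \<xi> x = (SUP p \<in> {(s, t). s \<le> 0 \<and> t \<le> 0}.
      \<xi> ^ nat (max \<bar>fst p\<bar> \<bar>snd p\<bar>) * \<bar>x (fst p) (snd p)\<bar>)"

definition XI :: "real set \<Rightarrow> (int \<Rightarrow> int \<Rightarrow> real) set" where
  "XI I = {x. \<forall>s t. s \<le> 0 \<longrightarrow> t \<le> 0 \<longrightarrow> x s t \<in> I}"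

end

theory Submission
  imports Defs
begin

unbundle no vec_syntax
unbundle fps_syntax

lemma dbl_aux:
  fixes a :: "nat \<Rightarrow> nat \<Rightarrow> real"
  assumes z: "\<And>i n. n < i \<Longrightarrow> a i n = 0"
  shows "(\<Sum>n<N. \<Sum>i\<le>n. a i n) = (\<Sum>i<N. \<Sum>n<N. a i n)"
proof -
  have "(\<Sum>n<N. \<Sum>i\<le>n. a i n) = (\<Sum>n<N. \<Sum>i<N. a i n)"
  proof (rule sum.cong[OF refl])
    fix n assume "n \<in> {..<N}"
    then have "{..n} \<subseteq> {..<N}" by auto
    then show "(\<Sum>i\<le>n. a i n) = (\<Sum>i<N. a i n)"
      by (intro sum.mono_neutral_left) (auto simp: z)
  qed
  also have "\<dots> = (\<Sum>i<N. \<Sum>n<N. a i n)" by (rule sum.swap)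
  finally show ?thesis .
qed

lemma dbl:
  fixes a :: "nat \<Rightarrow> nat \<Rightarrow> real"
  assumes nn: "\<And>i n. 0 \<le> a i n" and z: "\<And>i n. n < i \<Longrightarrow> a i n = 0"
    and sm: "\<And>i. summable (a i)"
    and either: "summable (\<lambda>i. suminf (a i)) \<or> summable (\<lambda>n. \<Sum>i\<le>n. a i n)"
  shows "summable (\<lambda>i. suminf (a i))" "summable (\<lambda>n. \<Sum>i\<le>n. a i n)"
    "(\<Sum>i. suminf (a i)) = (\<Sum>n. \<Sum>i\<le>n. a i n)"
proof -
  have A: "summable (\<lambda>n. \<Sum>i\<le>n. a i n) \<and> (\<Sum>n. \<Sum>i\<le>n. a i n) \<le> (\<Sum>i. suminf (a i))"
    if r: "summable (\<lambda>i. suminf (a i))"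
  proof -
    have b: "(\<Sum>n<N. \<Sum>i\<le>n. a i n) \<le> (\<Sum>i. suminf (a i))" for N
    proof -
      have "(\<Sum>n<N. \<Sum>i\<le>n. a i n) = (\<Sum>i<N. \<Sum>n<N. a i n)" by (rule dbl_aux[OF z])
      also have "\<dots> \<le> (\<Sum>i<N. suminf (a i))"
        by (intro sum_mono sum_le_suminf[OF sm]) (auto simp: nn)
      also have "\<dots> \<le> (\<Sum>i. suminf (a i))"
        by (intro sum_le_suminf[OF r]) (auto intro: suminf_nonneg sm nn)
      finally show ?thesis .
    qed
    have s: "summable (\<lambda>n. \<Sum>i\<le>n. a i n)"
      by (rule summableI_nonneg_bounded[where x="\<Sum>i. suminf (a i)"]) (auto intro: sum_nonneg nn b)
    show ?thesis using s b by (auto intro: suminf_le_const)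
  qed
  have B: "summable (\<lambda>i. suminf (a i)) \<and> (\<Sum>i. suminf (a i)) \<le> (\<Sum>n. \<Sum>i\<le>n. a i n)"
    if d: "summable (\<lambda>n. \<Sum>i\<le>n. a i n)"
  proof -
    have b: "(\<Sum>i<I. suminf (a i)) \<le> (\<Sum>n. \<Sum>i\<le>n. a i n)" for I
    proof -
      have lim: "(\<lambda>N. \<Sum>i<I. \<Sum>n<N. a i n) \<longlonglongrightarrow> (\<Sum>i<I. suminf (a i))"
        by (intro tendsto_sum summable_LIMSEQ sm)
      have "(\<Sum>i<I. \<Sum>n<N. a i n) \<le> (\<Sum>n. \<Sum>i\<le>n. a i n)" for N
      proof -
        let ?M = "max I N"
        have "(\<Sum>i<I. \<Sum>n<N. a i n) \<le> (\<Sum>i<?M. \<Sum>n<N. a i n)"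
          by (intro sum_mono2) (auto intro: sum_nonneg nn)
        also have "\<dots> \<le> (\<Sum>i<?M. \<Sum>n<?M. a i n)"
          by (intro sum_mono sum_mono2) (auto intro: nn)
        also have "\<dots> = (\<Sum>n<?M. \<Sum>i\<le>n. a i n)" by (rule dbl_aux[OF z, symmetric])
        also have "\<dots> \<le> (\<Sum>n. \<Sum>i\<le>n. a i n)"
          by (intro sum_le_suminf[OF d]) (auto intro: sum_nonneg nn)
        finally show ?thesis .
      qed
      then show ?thesis by (intro LIMSEQ_le_const2[OF lim]) auto
    qed
    have s: "summable (\<lambda>i. suminf (a i))"
      by (rule summableI_nonneg_bounded[where x="\<Sum>n. \<Sum>i\<le>n. a i n"]) (auto intro: suminf_nonneg sm nn b)
    show ?thesis using s b by (auto intro: suminf_le_const)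
  qed
  show s1: "summable (\<lambda>i. suminf (a i))" using either A B by blast
  show s2: "summable (\<lambda>n. \<Sum>i\<le>n. a i n)" using either A B by blast
  show "(\<Sum>i. suminf (a i)) = (\<Sum>n. \<Sum>i\<le>n. a i n)" using A[OF s1] B[OF s2] by linarith
qed



definition fev :: "real fps \<Rightarrow> real \<Rightarrow> real" where "fev f w = (\<Sum>n. f$n * w^n)"
definition fcv :: "real fps \<Rightarrow> real \<Rightarrow> bool" where "fcv f w = summable (\<lambda>n. f$n * w^n)"
definition fnn :: "real fps \<Rightarrow> bool" where "fnn f = (\<forall>n. 0 \<le> f$n)"

lemma fnn_mult: "fnn f \<Longrightarrow> fnn g \<Longrightarrow> fnn (f * g)"
  unfolding fnn_def fps_mult_nth by (auto intro!: sum_nonneg)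

lemma fnn_power: "fnn f \<Longrightarrow> fnn (f ^ k)"
proof (induction k)
  case 0 then show ?case by (auto simp: fnn_def)
next
  case (Suc k) then show ?case using fnn_mult[of f "f^k"] by simp
qed

lemma fnn_add: "fnn f \<Longrightarrow> fnn g \<Longrightarrow> fnn (f + g)"
  unfolding fnn_def by (auto intro!: add_nonneg_nonneg)

lemma fnn_X_mult: "fnn f \<Longrightarrow> fnn (fps_X * f)"
  unfolding fnn_def by auto

lemma fnn_compose: "fnn f \<Longrightarrow> fnn g \<Longrightarrow> fnn (f oo g)"
  unfolding fnn_def fps_compose_nth using fnn_power[of g, unfolded fnn_def]
  by (auto intro!: sum_nonneg)

lemma fev_nonneg: "fnn f \<Longrightarrow> 0 \<le> w \<Longrightarrow> fcv f w \<Longrightarrow> 0 \<le> fev f w"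
  unfolding fev_def fnn_def fcv_def by (intro suminf_nonneg) auto

lemma ev_mult:
  assumes "fnn f" "fnn g" "0 \<le> w" "fcv f w" "fcv g w"
  shows "fcv (f * g) w" "fev (f * g) w = fev f w * fev g w"
proof -
  let ?a = "\<lambda>k. f$k * w^k" and ?b = "\<lambda>k. g$k * w^k"
  have na: "summable (\<lambda>k. norm (?a k))" using assms unfolding fcv_def fnn_def
    by (subst real_norm_def, subst abs_of_nonneg) auto
  have nb: "summable (\<lambda>k. norm (?b k))" using assms unfolding fcv_def fnn_def
    by (subst real_norm_def, subst abs_of_nonneg) auto
  have eq: "(\<Sum>i\<le>k. ?a i * ?b (k - i)) = (f*g)$k * w^k" for k
  proof -
    have "(\<Sum>i\<le>k. ?a i * ?b (k - i)) = (\<Sum>i\<le>k. f$i * g$(k-i) * w^k)"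
      by (intro sum.cong refl) (auto simp: power_add[symmetric])
    also have "\<dots> = (f*g)$k * w^k" by (simp add: fps_mult_nth atLeast0AtMost sum_distrib_right)
    finally show ?thesis .
  qed
  have "(\<lambda>k. (f*g)$k * w^k) sums (fev f w * fev g w)"
    using Cauchy_product_sums[OF na nb] unfolding eq fev_def .
  then show "fcv (f * g) w" "fev (f * g) w = fev f w * fev g w"
    unfolding fcv_def fev_def by (auto simp: sums_iff)
qed

lemma ev_power:
  assumes "fnn f" "0 \<le> w" "fcv f w"
  shows "fcv (f ^ k) w \<and> fev (f ^ k) w = fev f w ^ k"
proof (induction k)
  case 0
  have e: "(\<lambda>n. (1::real fps)$n * w^n) = (\<lambda>n. if n = 0 then 1 else 0)" by auto
  have "(\<lambda>n. if n = 0 then (1::real) else 0) sums 1" using sums_single[of 0 "\<lambda>_. 1::real"] by simp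
  then have S: "(\<lambda>n. (1::real fps)$n * w^n) sums 1" unfolding e .
  show ?case using S by (simp only: fcv_def fev_def power_0 sums_iff)
next
  case (Suc k)
  then show ?case using ev_mult[of f "f^k" w] assms fnn_power[OF assms(1)] by auto
qed

lemma ev_add:
  assumes "fcv f w" "fcv g w"
  shows "fcv (f + g) w" "fev (f + g) w = fev f w + fev g w"
  using assms unfolding fcv_def fev_def
  by (auto simp: distrib_right intro: summable_add suminf_add[symmetric])

lemma ev_X_mult:
  assumes "fcv f w"
  shows "fcv (fps_X * f) w" "fev (fps_X * f) w = w * fev f w"
proof -
  have s: "summable (\<lambda>n. w * (f$n * w^n))" using assms unfolding fcv_def by (rule summable_mult)
  have e: "(\<lambda>n. (fps_X * f)$(Suc n) * w^(Suc n)) = (\<lambda>n. w * (f$n * w^n))" by auto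
  have s2: "summable (\<lambda>n. (fps_X * f)$n * w^n)"
    using s unfolding e[symmetric] by (subst summable_Suc_iff[symmetric])
  then show "fcv (fps_X * f) w" unfolding fcv_def .
  have "fev (fps_X * f) w = (\<Sum>n. (fps_X * f)$(Suc n) * w^(Suc n)) + (fps_X * f)$0 * w^0"
    unfolding fev_def using suminf_split_head[OF s2] by simp
  also have "\<dots> = w * fev f w" unfolding e fev_def using assms unfolding fcv_def
    by (simp add: suminf_mult)
  finally show "fev (fps_X * f) w = w * fev f w" .
qed

lemma ev_compose:
  assumes K: "fnn K" and P: "fnn P" "P$0 = 0" and w: "0 \<le> w" "fcv P w"
    and either: "summable (\<lambda>i. K$i * fev P w ^ i) \<or> fcv (K oo P) w"
  shows "summable (\<lambda>i. K$i * fev P w ^ i)" "fcv (K oo P) w"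
    "fev (K oo P) w = (\<Sum>i. K$i * fev P w ^ i)"
proof -
  define a where "a i n = K$i * (P^i)$n * w^n" for i n
  have nn: "0 \<le> a i n" for i n
    using K fnn_power[OF P(1), of i] w unfolding a_def fnn_def by auto
  have z: "a i n = 0" if "n < i" for i n
    using startsby_zero_power_prefix[OF P(2), of i] that unfolding a_def by auto
  have pw: "fcv (P^i) w \<and> fev (P^i) w = fev P w ^ i" for i using ev_power[OF P(1) w(1) w(2)] .
  have ai: "a i = (\<lambda>n. K$i * ((P^i)$n * w^n))" for i unfolding a_def by (auto simp: mult.assoc)
  have sm: "summable (a i)" for i using pw[of i] unfolding ai fcv_def by (intro summable_mult) auto
  have si: "suminf (a i) = K$i * fev P w ^ i" for i
    using pw[of i] unfolding ai fev_def fcv_def by (simp add: suminf_mult)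
  have sn: "(\<Sum>i\<le>n. a i n) = (K oo P)$n * w^n" for n
    unfolding a_def fps_compose_nth atLeast0AtMost by (simp add: sum_distrib_right)
  have e2: "summable (\<lambda>i. suminf (a i)) \<or> summable (\<lambda>n. \<Sum>i\<le>n. a i n)"
    using either unfolding si sn fcv_def .
  have D1: "summable (\<lambda>i. suminf (a i))" by (rule dbl(1)) (fact nn, fact z, fact sm, fact e2)
  have D2: "summable (\<lambda>n. \<Sum>i\<le>n. a i n)" by (rule dbl(2)) (fact nn, fact z, fact sm, fact e2)
  have D3: "(\<Sum>i. suminf (a i)) = (\<Sum>n. \<Sum>i\<le>n. a i n)" by (rule dbl(3)) (fact nn, fact z, fact sm, fact e2)
  show "summable (\<lambda>i. K$i * fev P w ^ i)" using D1 unfolding si .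
  show "fcv (K oo P) w" using D2 unfolding sn fcv_def .
  show "fev (K oo P) w = (\<Sum>i. K$i * fev P w ^ i)" using D3 unfolding si sn fev_def by simp
qed



lemma ev_diff:
  assumes "fcv f w" "fcv g w"
  shows "fcv (f - g) w" "fev (f - g) w = fev f w - fev g w"
  using assms unfolding fcv_def fev_def
  by (auto simp: left_diff_distrib intro: summable_diff suminf_diff[symmetric])

lemma core:
  fixes m \<kappa> :: "nat \<Rightarrow> real"
  assumes mnn: "\<And>n. 0 \<le> m n" and knn: "\<And>n. 0 \<le> \<kappa> n" and m0: "m 0 = 1" and k0: "\<kappa> 0 = 0"
   and rel: "Abs_fps \<kappa> oo (fps_X * Abs_fps m) = Abs_fps m - 1"
   and w: "0 < w1" "w1 < w2" and sm: "summable (\<lambda>n. m n * w2^n)"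
  shows "summable (\<lambda>i. real (i+1) * \<kappa> (i+2) * (w1 * (\<Sum>n. m n * w1^n))^(i+2))"
    "(\<Sum>i. real (i+1) * \<kappa> (i+2) * (w1 * (\<Sum>n. m n * w1^n))^(i+2)) < 1"
proof -
  define Mf where "Mf = Abs_fps m"
  define Kf where "Kf = Abs_fps \<kappa>"
  define P where "P = fps_X * Mf"
  have fM: "fnn Mf" and fK: "fnn Kf" and fP: "fnn P" and P0: "P$0 = 0"
    using mnn knn unfolding fnn_def Mf_def Kf_def P_def by auto
  have w2: "0 < w2" using w by linarith
  have cM2: "fcv Mf w2" using sm unfolding fcv_def Mf_def by simp
  have cM1: "fcv Mf w1" using powser_inside[OF sm, of w1] w unfolding fcv_def Mf_def by simp
  have cP: "fcv P w" "fev P w = w * fev Mf w" if "fcv Mf w" for w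
    using ev_X_mult[OF that] unfolding P_def by auto
  have one: "fcv 1 w \<and> fev 1 w = 1" if "0 \<le> w" for w using ev_power[of 0 w 0] that by (simp add: fnn_def fcv_def)
  have rel': "Kf oo P = Mf - 1" using rel unfolding Kf_def P_def Mf_def .
  have cKP: "fcv (Kf oo P) w" "fev (Kf oo P) w = fev Mf w - 1" if "fcv Mf w" "0 \<le> w" for w
    using ev_diff[OF that(1) conjunct1[OF one[OF that(2)]]] one[OF that(2)] unfolding rel' by auto
  define \<phi>1 where "\<phi>1 = fev P w1"
  define \<phi>2 where "\<phi>2 = fev P w2"
  define M1 where "M1 = fev Mf w1"
  define M2 where "M2 = fev Mf w2"
  have K2: "summable (\<lambda>i. Kf$i * \<phi>2 ^ i)"
    using ev_compose(1)[OF fK fP P0 _ cP(1)[OF cM2]] cKP(1)[OF cM2 less_imp_le[OF w2]] w2 unfolding \<phi>2_def by auto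
  have K1: "fev (Kf oo P) w1 = (\<Sum>i. Kf$i * \<phi>1 ^ i)"
    using ev_compose(3)[OF fK fP P0 _ cP(1)[OF cM1]] cKP(1)[OF cM1 less_imp_le[OF w(1)]] w unfolding \<phi>1_def by auto
  have M1ge: "1 \<le> M1"
  proof -
    have "(\<Sum>n<1. m n * w1^n) \<le> (\<Sum>n. m n * w1^n)"
      using cM1 w mnn unfolding fcv_def Mf_def by (intro sum_le_suminf) auto
    then show ?thesis unfolding M1_def fev_def Mf_def using m0 by simp
  qed
  have M12: "M1 \<le> M2"
    using cM1 cM2 w mnn unfolding M1_def M2_def fev_def fcv_def Mf_def
    by (intro suminf_le) (auto intro!: mult_left_mono power_mono)
  have phi1: "\<phi>1 = w1 * M1" using cP(2)[OF cM1] unfolding \<phi>1_def M1_def .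
  have phi2: "\<phi>2 = w2 * M2" using cP(2)[OF cM2] unfolding \<phi>2_def M2_def .
  have p12: "\<phi>1 < \<phi>2"
  proof -
    have "w1 * M1 < w2 * M1" using w M1ge by auto
    also have "\<dots> \<le> w2 * M2" using M12 w by auto
    finally show ?thesis using phi1 phi2 by simp
  qed
  have p1: "0 < \<phi>1" using phi1 w M1ge by auto
  define Kd where "Kd = fps_deriv Kf"
  define D where "D = fps_deriv Mf"
  have fKd: "fnn Kd" and fD: "fnn D"
    using mnn knn unfolding fnn_def Kd_def D_def Kf_def Mf_def by auto
  have cKd: "summable (\<lambda>i. Kd$i * \<phi>1 ^ i)"
  proof -
    have "summable (\<lambda>n. diffs \<kappa> n * \<phi>1 ^ n)"
    proof (rule termdiff_converges[where K=\<phi>2])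
      show "norm \<phi>1 < \<phi>2" using p1 p12 by auto
      fix x :: real assume "norm x < \<phi>2"
      then show "summable (\<lambda>n. \<kappa> n * x ^ n)"
        using powser_inside[of \<kappa> \<phi>2 x] K2 p1 p12 unfolding Kf_def by auto
    qed
    then show ?thesis unfolding Kd_def Kf_def diffs_def by (simp add: algebra_simps)
  qed
  have cD: "fcv D w1"
  proof -
    have "summable (\<lambda>n. diffs m n * w1 ^ n)"
    proof (rule termdiff_converges[where K=w2])
      show "norm w1 < w2" using w by auto
      fix x :: real assume "norm x < w2"
      then show "summable (\<lambda>n. m n * x ^ n)"
        using powser_inside[of m w2 x] sm w by auto
    qed
    then show ?thesis unfolding D_def Mf_def diffs_def fcv_def by (simp add: algebra_simps)
  qed
  have der: "D = (Kd oo P) * (Mf + fps_X * D)"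
  proof -
    have "fps_deriv (Kf oo P) = (Kd oo P) * fps_deriv P"
      unfolding Kd_def by (rule fps_compose_deriv[OF P0])
    moreover have "fps_deriv (Kf oo P) = D" unfolding rel' D_def by simp
    moreover have "fps_deriv P = Mf + fps_X * D" unfolding P_def D_def by simp
    ultimately show ?thesis by simp
  qed
  have cKdP: "fcv (Kd oo P) w1" and A_eq: "fev (Kd oo P) w1 = (\<Sum>i. Kd$i * \<phi>1 ^ i)"
    using ev_compose(2,3)[OF fKd fP P0 _ cP(1)[OF cM1]] cKd w unfolding \<phi>1_def by auto
  define A where "A = fev (Kd oo P) w1"
  define D1 where "D1 = fev D w1"
  have cXD: "fcv (fps_X * D) w1" "fev (fps_X * D) w1 = w1 * D1" using ev_X_mult[OF cD] unfolding D1_def by auto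
  have cS: "fcv (Mf + fps_X * D) w1" "fev (Mf + fps_X * D) w1 = M1 + w1 * D1"
    using ev_add[OF cM1 cXD(1)] cXD(2) unfolding M1_def by auto
  have fS: "fnn (Mf + fps_X * D)" by (intro fnn_add fnn_X_mult fM fD)
  have DD: "D1 = A * (M1 + w1 * D1)"
    using ev_mult(2)[OF fnn_compose[OF fKd fP] fS _ cKdP cS(1)] cS(2) w der unfolding A_def D1_def
    by auto
  have A0: "0 \<le> A" unfolding A_def by (rule fev_nonneg[OF fnn_compose[OF fKd fP] _ cKdP]) (use w in auto)
  have D0: "0 \<le> D1" unfolding D1_def by (rule fev_nonneg[OF fD _ cD]) (use w in auto)
  have wA: "w1 * A < 1"
  proof (cases "A = 0")
    case True then show ?thesis by simp
  next
    case False
    then have "0 < A * M1" using A0 M1ge by auto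
    then have "0 < D1 * (1 - w1 * A)" using DD by (simp add: algebra_simps)
    then show ?thesis using D0 by (simp add: zero_less_mult_iff)
  qed
  define b where "b i = real (i+1) * \<kappa> (i+1) * \<phi>1 ^ (i+1)" for i
  define c where "c i = \<kappa> i * \<phi>1 ^ i" for i
  have Kdn: "Kd$i = real (i+1) * \<kappa> (i+1)" for i unfolding Kd_def Kf_def by simp
  have sb: "b sums (\<phi>1 * A)"
  proof -
    have "(\<lambda>i. Kd$i * \<phi>1 ^ i) sums A" using cKd A_eq unfolding A_def by (simp add: sums_iff)
    then have "(\<lambda>i. \<phi>1 * (Kd$i * \<phi>1 ^ i)) sums (\<phi>1 * A)" by (rule sums_mult)
    then show ?thesis unfolding b_def Kdn by (simp add: algebra_simps)
  qed
  have sc: "c sums (M1 - 1)"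
  proof -
    have "summable c" using ev_compose(1)[OF fK fP P0 _ cP(1)[OF cM1]] cKP(1)[OF cM1 less_imp_le[OF w(1)]] w
      unfolding c_def \<phi>1_def Kf_def by auto
    moreover have "suminf c = M1 - 1" using K1 cKP(2)[OF cM1 less_imp_le[OF w(1)]] unfolding c_def M1_def Kf_def by simp
    ultimately show ?thesis by (simp add: sums_iff)
  qed
  have sc1: "(\<lambda>i. c (Suc i)) sums (M1 - 1)"
    using sc sums_Suc_iff[of c "M1 - 1"] unfolding c_def using k0 by simp
  have sd: "(\<lambda>i. b i - c (Suc i)) sums (\<phi>1 * A - (M1 - 1))" by (rule sums_diff[OF sb sc1])
  have sd1: "(\<lambda>i. b (Suc i) - c (Suc (Suc i))) sums (\<phi>1 * A - (M1 - 1))"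
    using sd sums_Suc_iff[of "\<lambda>i. b i - c (Suc i)"] unfolding b_def c_def by simp
  have eqS: "b (Suc i) - c (Suc (Suc i)) = real (i+1) * \<kappa> (i+2) * \<phi>1^(i+2)" for i
    unfolding b_def c_def by (simp add: algebra_simps)
  have fin: "(\<lambda>i. real (i+1) * \<kappa> (i+2) * \<phi>1^(i+2)) sums (\<phi>1 * A - (M1 - 1))"
    using sd1 unfolding eqS .
  have val: "\<phi>1 * A - (M1 - 1) < 1"
  proof -
    have "\<phi>1 * A - (M1 - 1) = 1 - M1 * (1 - w1 * A)" unfolding phi1 by (simp add: algebra_simps)
    moreover have "0 < M1 * (1 - w1 * A)" using M1ge wA by auto
    ultimately show ?thesis by simp
  qed
  have phiM: "w1 * (\<Sum>n. m n * w1^n) = \<phi>1" using phi1 unfolding M1_def fev_def Mf_def by simp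
  show "summable (\<lambda>i. real (i+1) * \<kappa> (i+2) * (w1 * (\<Sum>n. m n * w1^n))^(i+2))"
    using fin unfolding phiM by (simp add: sums_iff)
  show "(\<Sum>i. real (i+1) * \<kappa> (i+2) * (w1 * (\<Sum>n. m n * w1^n))^(i+2)) < 1"
    using fin val unfolding phiM by (simp add: sums_iff)
qed



lemma rel_coeff:
  fixes \<kappa> :: "nat \<Rightarrow> real" and M :: "real fps"
  assumes k0: "\<kappa> 0 = 0"
  shows "(Abs_fps \<kappa> oo (fps_X * M))$n = (\<Sum>s=1..n. \<kappa> s * (M^s)$(n - s))"
proof -
  have "(Abs_fps \<kappa> oo (fps_X * M))$n = (\<Sum>i=0..n. \<kappa> i * ((fps_X * M)^i)$n)"
    by (simp add: fps_compose_nth)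
  also have "\<dots> = (\<Sum>i=0..n. \<kappa> i * (M^i)$(n - i))"
    by (intro sum.cong refl) (auto simp: power_mult_distrib fps_X_power_mult_nth)
  also have "\<dots> = (\<Sum>i=1..n. \<kappa> i * (M^i)$(n - i))"
    using k0 by (simp add: sum.atLeast_Suc_atMost)
  finally show ?thesis .
qed

lemma rel_iff:
  fixes \<kappa> m :: "nat \<Rightarrow> real"
  assumes k0: "\<kappa> 0 = 0" and m0: "m 0 = 1"
  shows "(\<forall>n\<ge>1. m n = (\<Sum>s=1..n. \<kappa> s * fps_nth (Abs_fps m ^ s) (n - s)))
     \<longleftrightarrow> Abs_fps \<kappa> oo (fps_X * Abs_fps m) = Abs_fps m - 1"
proof
  assume H: "\<forall>n\<ge>1. m n = (\<Sum>s=1..n. \<kappa> s * fps_nth (Abs_fps m ^ s) (n - s))"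
  show "Abs_fps \<kappa> oo (fps_X * Abs_fps m) = Abs_fps m - 1"
  proof (rule fps_ext)
    fix n show "(Abs_fps \<kappa> oo (fps_X * Abs_fps m))$n = (Abs_fps m - 1)$n"
      using H m0 k0 unfolding rel_coeff[of \<kappa>, OF k0] by (cases "n = 0") auto
  qed
next
  assume H: "Abs_fps \<kappa> oo (fps_X * Abs_fps m) = Abs_fps m - 1"
  show "\<forall>n\<ge>1. m n = (\<Sum>s=1..n. \<kappa> s * fps_nth (Abs_fps m ^ s) (n - s))"
  proof (intro allI impI)
    fix n :: nat assume "1 \<le> n"
    have "(Abs_fps \<kappa> oo (fps_X * Abs_fps m))$n = (Abs_fps m - 1)$n" using H by simp
    then show "m n = (\<Sum>s=1..n. \<kappa> s * fps_nth (Abs_fps m ^ s) (n - s))"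
      using \<open>1 \<le> n\<close> unfolding rel_coeff[of \<kappa>, OF k0] by simp
  qed
qed

lemma rel_unique_exists:
  fixes m :: "nat \<Rightarrow> real"
  assumes m0: "m 0 = 1"
  shows "\<exists>!\<kappa>. \<kappa> 0 = 0 \<and> Abs_fps \<kappa> oo (fps_X * Abs_fps m) = Abs_fps m - 1"
proof -
  define P where "P = fps_X * Abs_fps m"
  have P0: "P$0 = 0" and P1: "P$1 \<noteq> 0" using m0 unfolding P_def by auto
  have I0: "fps_inv P $ 0 = 0" by (simp add: fps_inv_def)
  define K where "K = (Abs_fps m - 1) oo fps_inv P"
  have "K oo P = (Abs_fps m - 1) oo (fps_inv P oo P)"
    unfolding K_def by (rule fps_compose_assoc[OF P0 I0, symmetric])
  also have "\<dots> = Abs_fps m - 1" using fps_inv[OF P0 P1] by simp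
  finally have KP: "K oo P = Abs_fps m - 1" .
  have K0: "K$0 = 0" unfolding K_def using m0 by simp
  show ?thesis
  proof (rule ex1I[of _ "fps_nth K"])
    show "fps_nth K 0 = 0 \<and> Abs_fps (fps_nth K) oo (fps_X * Abs_fps m) = Abs_fps m - 1"
      using K0 KP unfolding P_def by (simp add: fps_nth_inverse)
  next
    fix \<kappa> assume H: "\<kappa> 0 = 0 \<and> Abs_fps \<kappa> oo (fps_X * Abs_fps m) = Abs_fps m - 1"
    have "Abs_fps \<kappa> = Abs_fps \<kappa> oo (P oo fps_inv P)" using fps_inv_right[OF P0 P1] by simp
    also have "\<dots> = (Abs_fps \<kappa> oo P) oo fps_inv P" by (rule fps_compose_assoc[OF I0 P0])
    also have "\<dots> = (K oo P) oo fps_inv P" using H KP unfolding P_def by simp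
    also have "\<dots> = K oo (P oo fps_inv P)" by (rule fps_compose_assoc[OF I0 P0, symmetric])
    also have "\<dots> = K" using fps_inv_right[OF P0 P1] by simp
    finally have "fps_nth (Abs_fps \<kappa>) = fps_nth K" by simp
    then show "\<kappa> = fps_nth K" using Abs_fps_inverse[of \<kappa>] by simp
  qed
qed

definition Geo :: "real \<Rightarrow> real fps" where "Geo c = Abs_fps (\<lambda>n. c ^ n)"
definition Tsh :: "real \<Rightarrow> real fps" where "Tsh c = fps_X * Geo c"

lemma Geo_eq: "Geo c * (1 - fps_const c * fps_X) = 1"
proof -
  have e: "Geo c * (1 - fps_const c * fps_X) = Geo c - fps_const c * (fps_X * Geo c)"
    by (simp add: right_diff_distrib mult.left_commute mult.commute)
  show ?thesis unfolding e
  proof (rule fps_ext)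
    fix n show "(Geo c - fps_const c * (fps_X * Geo c))$n = (1::real fps)$n"
      by (cases n) (simp_all add: Geo_def)
  qed
qed

lemma Geo_rec: "Geo c = 1 + fps_const c * Tsh c"
proof (rule fps_ext)
  fix n show "Geo c $ n = (1 + fps_const c * Tsh c) $ n"
    by (cases n) (simp_all add: Geo_def Tsh_def)
qed

lemma Tsh0: "Tsh c $ 0 = 0" by (simp add: Tsh_def)

lemma shift_rel:
  fixes \<kappa> :: "nat \<Rightarrow> real" and M :: "real fps" and c :: real
  assumes rel: "Abs_fps \<kappa> oo (fps_X * M) = M - 1"
  defines "M' \<equiv> Geo c * (M oo Tsh c)"
  shows "(Abs_fps \<kappa> + fps_const c * fps_X) oo (fps_X * M') = M' - 1"
proof -
  let ?T = "Tsh c"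
  have T0: "?T$0 = 0" by (rule Tsh0)
  have XM0: "(fps_X * M)$0 = 0" by simp
  have XM': "fps_X * M' = (fps_X * M) oo ?T"
    unfolding M'_def fps_compose_mult_distrib[OF T0] by (simp add: Tsh_def ac_simps)
  have "(Abs_fps \<kappa> + fps_const c * fps_X) oo (fps_X * M')
      = (Abs_fps \<kappa> oo ((fps_X * M) oo ?T)) + ((fps_const c * fps_X) oo (fps_X * M'))"
    by (simp only: fps_compose_add_distrib XM')
  also have "Abs_fps \<kappa> oo ((fps_X * M) oo ?T) = (M - 1) oo ?T"
    using fps_compose_assoc[OF T0 XM0, of "Abs_fps \<kappa>"] rel by simp
  also have "(fps_const c * fps_X) oo (fps_X * M') = fps_const c * (fps_X * M')"
    by (simp add: fps_compose_mult_distrib)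
  also have "(M - 1) oo ?T = (M oo ?T) - 1" by (simp add: fps_compose_sub_distrib)
  finally have "(Abs_fps \<kappa> + fps_const c * fps_X) oo (fps_X * M') = ((M oo ?T) - 1) + fps_const c * (fps_X * M')" .
  also have "\<dots> = M' - 1"
  proof -
    have g: "M' = (1 + fps_const c * (fps_X * Geo c)) * (M oo ?T)"
      unfolding M'_def by (rule arg_cong[where f="\<lambda>z. z * (M oo ?T)"], rule Geo_rec[unfolded Tsh_def])
    have "(M oo ?T) - 1 + fps_const c * (fps_X * M') = (1 + fps_const c * (fps_X * Geo c)) * (M oo ?T) - 1"
      unfolding M'_def by (simp add: ring_distribs mult.assoc)
    also have "\<dots> = M' - 1" by (simp only: g)
    finally show ?thesis .
  qed
  finally show ?thesis .
qed



lemma supp_ae: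
  fixes \<mu> :: "real measure"
  assumes S: "sets \<mu> = sets borel"
  shows "AE x in \<mu>. x \<in> msupp \<mu>"
proof -
  define F where "F = {ball x e | x e. e > 0 \<and> emeasure \<mu> (ball x e) = 0}"
  have op: "\<And>T. T \<in> F \<Longrightarrow> open T" unfolding F_def by auto
  obtain F' where F': "F' \<subseteq> F" "countable F'" "\<Union>F' = \<Union>F" by (rule Lindelof[OF op])
  have nul: "T \<in> null_sets \<mu>" if TF: "T \<in> F" for T
  proof -
    obtain x e where T: "T = ball x e" "emeasure \<mu> (ball x e) = 0" using TF unfolding F_def by blast
    have "ball x e \<in> sets \<mu>" unfolding S by simp
    then show ?thesis using T by (simp add: null_sets_def)
  qed
  have "(\<Union>T\<in>F'. T) \<in> null_sets \<mu>" by (rule null_sets_UN') (use F' nul in auto)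
  then have N: "\<Union>F \<in> null_sets \<mu>" using F' by simp
  show ?thesis
  proof (rule AE_I'[OF N], safe)
    fix x assume "x \<notin> msupp \<mu>"
    then obtain e where "e > 0" "\<not> emeasure \<mu> (ball x e) > 0" unfolding msupp_def by auto
    then have "emeasure \<mu> (ball x e) = 0" by (simp add: not_gr_zero)
    then have "ball x e \<in> F" using \<open>e > 0\<close> unfolding F_def by auto
    then show "x \<in> \<Union>F" using \<open>e > 0\<close> by (intro UnionI[of "ball x e"]) auto
  qed
qed

lemma supp_bounds:
  fixes \<mu> :: "real measure"
  assumes S: "sets \<mu> = sets borel" and C: "compact (msupp \<mu>)" and N: "msupp \<mu> \<noteq> {}"
  shows "AE x in \<mu>. Inf (msupp \<mu>) \<le> x \<and> x \<le> supp_sup \<mu>" "Inf (msupp \<mu>) \<le> supp_sup \<mu>"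
proof -
  have bd: "bdd_above (msupp \<mu>)" "bdd_below (msupp \<mu>)"
    using compact_imp_bounded[OF C] by (auto simp: bounded_imp_bdd_above bounded_imp_bdd_below)
  show "AE x in \<mu>. Inf (msupp \<mu>) \<le> x \<and> x \<le> supp_sup \<mu>"
    using supp_ae[OF S] by eventually_elim (use bd in \<open>auto simp: supp_sup_def intro: cInf_lower cSup_upper\<close>)
  obtain x where "x \<in> msupp \<mu>" using N by auto
  then show "Inf (msupp \<mu>) \<le> supp_sup \<mu>" unfolding supp_sup_def
    using bd by (meson cInf_lower cSup_upper order.trans)
qed



lemma Geo_inv_unique:
  fixes L :: "real fps"
  assumes "L * (1 - fps_const y * fps_X) = 1"
  shows "L = Geo y"
proof -
  have "L = L * ((1 - fps_const y * fps_X) * Geo y)" using Geo_eq[of y] by (simp add: ac_simps)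
  also have "\<dots> = Geo y" using assms by (simp add: mult.assoc[symmetric])
  finally show ?thesis .
qed

lemma Geo_shift: "Geo c * (Geo x oo Tsh c) = Geo (x + c)"
proof (rule Geo_inv_unique)
  let ?T = "Tsh c"
  have T0: "?T $ 0 = 0" by (rule Tsh0)
  have a: "(Geo x oo ?T) * (1 - fps_const x * ?T) = 1"
  proof -
    have "(Geo x * (1 - fps_const x * fps_X)) oo ?T = 1" by (simp only: Geo_eq fps_compose_1)
    moreover have "(Geo x * (1 - fps_const x * fps_X)) oo ?T = (Geo x oo ?T) * ((1 - fps_const x * fps_X) oo ?T)"
      by (rule fps_compose_mult_distrib[OF T0])
    moreover have "(1 - fps_const x * fps_X) oo ?T = 1 - fps_const x * ?T"
      by (simp only: fps_compose_sub_distrib fps_compose_1 fps_compose_mult_distrib[OF T0] fps_const_compose fps_X_fps_compose_startby0[OF T0])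
    ultimately show ?thesis by simp
  qed
  have b: "(1 - fps_const c * fps_X) * (1 - fps_const x * ?T) = 1 - fps_const (x + c) * fps_X"
  proof -
    have "(1 - fps_const c * fps_X) * ?T = fps_X * (Geo c * (1 - fps_const c * fps_X))"
      unfolding Tsh_def by (simp only: ac_simps)
    also have "\<dots> = fps_X" by (simp only: Geo_eq mult_1_right)
    finally have "(1 - fps_const c * fps_X) * ?T = fps_X" .
    then have "(1 - fps_const c * fps_X) * (fps_const x * ?T) = fps_const x * fps_X"
      by (metis mult.left_commute)
    then have H: "(1 - fps_const c * fps_X) * (fps_const x * ?T) = fps_const x * fps_X" .
    have "(1 - fps_const c * fps_X) * (1 - fps_const x * ?T) = (1 - fps_const c * fps_X) - (1 - fps_const c * fps_X) * (fps_const x * ?T)"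
      by (simp only: right_diff_distrib mult_1_right)
    also have "\<dots> = (1 - fps_const c * fps_X) - fps_const x * fps_X" by (simp only: H)
    also have "\<dots> = 1 - fps_const (x + c) * fps_X" by (simp add: fps_const_add distrib_right)
    finally show ?thesis .
  qed
  have "Geo c * (Geo x oo ?T) * (1 - fps_const (x + c) * fps_X)
      = (Geo c * (1 - fps_const c * fps_X)) * ((Geo x oo ?T) * (1 - fps_const x * ?T))"
    unfolding b[symmetric] by (simp only: ac_simps)
  also have "\<dots> = 1" using a Geo_eq[of c] by simp
  finally show "Geo c * (Geo x oo ?T) * (1 - fps_const (x + c) * fps_X) = 1" .
qed

lemma shift_coeff:
  fixes F :: "real fps"
  shows "(Geo c * (F oo Tsh c))$n = (\<Sum>i=0..n. c^i * (\<Sum>k=0..n-i. F$k * (Tsh c ^ k)$(n-i)))"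
  by (simp add: fps_mult_nth fps_compose_nth Geo_def)

lemma mom_shift:
  fixes \<mu> :: "real measure"
  assumes I: "\<And>k. integrable \<mu> (\<lambda>x. x^k)"
  shows "(Geo c * (Abs_fps (moment \<mu>) oo Tsh c))$n = (\<integral>x. (x + c)^n \<partial>\<mu>)"
proof -
  have px: "(x + c)^n = (\<Sum>i=0..n. c^i * (\<Sum>k=0..n-i. x^k * (Tsh c ^ k)$(n-i)))" for x
  proof -
    have "(x + c)^n = Geo (x + c) $ n" by (simp add: Geo_def)
    also have "\<dots> = (Geo c * (Geo x oo Tsh c))$n" by (simp only: Geo_shift)
    also have "\<dots> = (\<Sum>i=0..n. c^i * (\<Sum>k=0..n-i. x^k * (Tsh c ^ k)$(n-i)))"
      by (simp only: shift_coeff) (simp add: Geo_def)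
    finally show ?thesis .
  qed
  have "(\<integral>x. (x + c)^n \<partial>\<mu>) = (\<integral>x. (\<Sum>i=0..n. c^i * (\<Sum>k=0..n-i. x^k * (Tsh c ^ k)$(n-i))) \<partial>\<mu>)"
    by (simp only: px)
  also have "\<dots> = (\<Sum>i=0..n. c^i * (\<Sum>k=0..n-i. (\<integral>x. x^k \<partial>\<mu>) * (Tsh c ^ k)$(n-i)))"
    using I by (simp add: integral_sum integrable_sum integral_mult_right integral_mult_left)
  also have "\<dots> = (Geo c * (Abs_fps (moment \<mu>) oo Tsh c))$n"
    by (simp only: shift_coeff) (simp add: moment_def)
  finally show ?thesis by simp
qed

lemma int_pow:
  fixes \<mu> :: "real measure"
  assumes P: "prob_space \<mu>" and S: "sets \<mu> = sets borel" and C: "compact (msupp \<mu>)" and N: "msupp \<mu> \<noteq> {}"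
  shows "integrable \<mu> (\<lambda>x. x^k)"
proof -
  interpret prob_space \<mu> by (rule P)
  define r where "r = max \<bar>Inf (msupp \<mu>)\<bar> \<bar>supp_sup \<mu>\<bar>"
  have "AE x in \<mu>. norm (x^k) \<le> r^k"
    using supp_bounds(1)[OF S C N]
  proof eventually_elim
    case (elim x)
    then have "\<bar>x\<bar> \<le> r" unfolding r_def by auto
    then show ?case by (simp add: power_abs power_mono)
  qed
  moreover have "(\<lambda>x::real. x^k) \<in> borel_measurable \<mu>"
    unfolding measurable_cong_sets[OF S refl] by measurable
  ultimately show ?thesis by (rule integrable_const_bound)
qed


lemma stj_series:
  fixes \<mu> :: "real measure"
  assumes P: "prob_space \<mu>" and S: "sets \<mu> = sets borel" and C: "compact (msupp \<mu>)" and N: "msupp \<mu> \<noteq> {}"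
    and z: "z > supp_sup \<mu>"
  defines "c \<equiv> - Inf (msupp \<mu>)"
  defines "w \<equiv> 1 / (z + c)"
  shows "summable (\<lambda>n. (\<integral>x. (x + c)^n \<partial>\<mu>) * w^n)"
    "stieltjes \<mu> z = w * (\<Sum>n. (\<integral>x. (x + c)^n \<partial>\<mu>) * w^n)"
proof -
  interpret prob_space \<mu> by (rule P)
  define B where "B = supp_sup \<mu> + c"
  have B0: "0 \<le> B" using supp_bounds(2)[OF S C N] unfolding B_def c_def by simp
  have zc: "B < z + c" using z unfolding B_def by simp
  have w0: "0 < w" using zc B0 unfolding w_def by simp
  have wB: "w * B < 1" using zc B0 unfolding w_def by (simp add: field_simps)
  have ae: "AE x in \<mu>. 0 \<le> x + c \<and> x + c \<le> B"
    using supp_bounds(1)[OF S C N] by eventually_elim (auto simp: c_def B_def)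
  have meas: "f \<in> borel_measurable \<mu>" if "f \<in> borel_measurable borel" for f :: "real \<Rightarrow> real"
    unfolding measurable_cong_sets[OF S refl] by (rule that)
  define m' where "m' n = (\<integral>x. (x + c)^n \<partial>\<mu>)" for n
  have intp: "integrable \<mu> (\<lambda>x. (x + c)^n)" for n
  proof (rule integrable_const_bound[where B="B^n"])
    show "AE x in \<mu>. norm ((x + c)^n) \<le> B^n"
      using ae by eventually_elim (auto simp: power_mono)
    show "(\<lambda>x. (x + c)^n) \<in> borel_measurable \<mu>" by (rule meas) measurable
  qed
  have m'nn: "0 \<le> m' n" for n unfolding m'_def
    by (rule integral_nonneg_AE) (use ae in \<open>eventually_elim, auto\<close>)
  have m'le: "m' n \<le> B^n" for n unfolding m'_def
    by (rule integral_le_const[OF intp]) (use ae in \<open>eventually_elim, auto simp: power_mono\<close>)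
  have sm: "summable (\<lambda>n. m' n * w^n)"
  proof (rule summable_comparison_test'[where g="\<lambda>n. (w*B)^n"])
    show "summable (\<lambda>n. (w*B)^n)" using wB w0 B0 by (intro summable_geometric) auto
    fix n show "norm (m' n * w^n) \<le> (w*B)^n"
      using m'nn[of n] m'le[of n] w0 by (auto simp: power_mult_distrib mult_right_mono mult.commute)
  qed
  then show "summable (\<lambda>n. (\<integral>x. (x + c)^n \<partial>\<mu>) * w^n)" unfolding m'_def .
  define f where "f n x = w * ((x + c)^n * w^n)" for n x
  have fint: "integrable \<mu> (f n)" for n unfolding f_def using intp[of n] by simp
  have fsum: "AE x in \<mu>. summable (\<lambda>n. norm (f n x))"
    using ae
  proof eventually_elim
    case (elim x)
    have "summable (\<lambda>n. (w * (x + c))^n)"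
      using elim w0 wB by (intro summable_geometric) (auto intro: le_less_trans[OF mult_left_mono])
    then have "summable (\<lambda>n. w * (w * (x + c))^n)" by (rule summable_mult)
    then show ?case using elim w0 unfolding f_def by (simp add: power_mult_distrib ac_simps)
  qed
  have fint_norm: "(\<integral>x. norm (f n x) \<partial>\<mu>) = w * (m' n * w^n)" for n
  proof -
    have "(\<integral>x. norm (f n x) \<partial>\<mu>) = (\<integral>x. f n x \<partial>\<mu>)"
    proof (rule integral_cong_AE)
      have fm: "f n \<in> borel_measurable \<mu>" by (rule borel_measurable_integrable[OF fint])
      then show "f n \<in> borel_measurable \<mu>" .
      show "(\<lambda>x. norm (f n x)) \<in> borel_measurable \<mu>" using fm by measurable
      show "AE x in \<mu>. norm (f n x) = f n x"
        using ae by eventually_elim (use w0 in \<open>auto simp: f_def\<close>)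
    qed
    also have "\<dots> = w * (m' n * w^n)" unfolding f_def m'_def by simp
    finally show ?thesis .
  qed
  have fsum2: "summable (\<lambda>n. (\<integral>x. norm (f n x) \<partial>\<mu>))" unfolding fint_norm by (intro summable_mult sm)
  have val: "(\<integral>x. (\<Sum>n. f n x) \<partial>\<mu>) = (\<Sum>n. integral\<^sup>L \<mu> (f n))"
    by (rule integral_suminf[OF fint fsum fsum2])
  have val2: "integral\<^sup>L \<mu> (f n) = w * (m' n * w^n)" for n unfolding f_def m'_def by simp
  have "stieltjes \<mu> z = (\<integral>x. (\<Sum>n. f n x) \<partial>\<mu>)"
    unfolding stieltjes_def
  proof (rule integral_cong_AE)
    show "(\<lambda>x. 1 / (z - x)) \<in> borel_measurable \<mu>" by (rule meas) measurable
    show "(\<lambda>x. \<Sum>n. f n x) \<in> borel_measurable \<mu>"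
      by (rule borel_measurable_integrable, rule integrable_suminf[OF fint fsum fsum2])
    show "AE x in \<mu>. 1 / (z - x) = (\<Sum>n. f n x)"
      using ae
    proof eventually_elim
      case (elim x)
      have lt: "norm (w * (x + c)) < 1"
        using elim w0 wB by (auto intro: le_less_trans[OF mult_left_mono])
      have "(\<Sum>n. f n x) = w * (\<Sum>n. (w * (x + c))^n)"
        unfolding f_def using summable_geometric[OF lt]
        by (simp add: suminf_mult power_mult_distrib ac_simps)
      also have "\<dots> = w * (1 / (1 - w * (x + c)))" by (simp add: suminf_geometric[OF lt])
      also have "\<dots> = 1 / (z - x)" using zc elim unfolding w_def by (simp add: field_simps)
      finally show ?case by simp
    qed
  qed
  also have "\<dots> = w * (\<Sum>n. m' n * w^n)" unfolding val val2 using sm by (simp add: suminf_mult)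
  finally show "stieltjes \<mu> z = w * (\<Sum>n. (\<integral>x. (x + c)^n \<partial>\<mu>) * w^n)" unfolding m'_def .
qed


lemma stj_mono:
  fixes \<mu> :: "real measure"
  assumes P: "prob_space \<mu>" and S: "sets \<mu> = sets borel" and C: "compact (msupp \<mu>)" and N: "msupp \<mu> \<noteq> {}"
    and z: "supp_sup \<mu> < z1" "z1 \<le> z2"
  shows "stieltjes \<mu> z2 \<le> stieltjes \<mu> z1" "0 \<le> stieltjes \<mu> z2"
proof -
  interpret prob_space \<mu> by (rule P)
  define b where "b = supp_sup \<mu>"
  have ae: "AE x in \<mu>. x \<le> b" using supp_bounds(1)[OF S C N] unfolding b_def by eventually_elim auto
  have meas: "f \<in> borel_measurable \<mu>" if "f \<in> borel_measurable borel" for f :: "real \<Rightarrow> real"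
    unfolding measurable_cong_sets[OF S refl] by (rule that)
  have int: "integrable \<mu> (\<lambda>x. 1 / (z - x))" if "b < z" for z
  proof (rule integrable_const_bound[where B="1 / (z - b)"])
    show "AE x in \<mu>. norm (1 / (z - x)) \<le> 1 / (z - b)"
      using ae by eventually_elim (use that in \<open>auto simp: field_simps\<close>)
    show "(\<lambda>x. 1 / (z - x)) \<in> borel_measurable \<mu>" by (rule meas) measurable
  qed
  show "stieltjes \<mu> z2 \<le> stieltjes \<mu> z1" unfolding stieltjes_def
    by (rule integral_mono_AE[OF int int]) (use ae z in \<open>auto simp: b_def elim!: eventually_mono intro!: divide_left_mono mult_pos_pos\<close>)
  show "0 \<le> stieltjes \<mu> z2" unfolding stieltjes_def
    by (rule integral_nonneg_AE) (use ae z in \<open>auto simp: b_def elim!: eventually_mono\<close>)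
qed

lemma Gbplus_eq:
  fixes \<mu> :: "real measure"
  assumes P: "prob_space \<mu>" and S: "sets \<mu> = sets borel" and C: "compact (msupp \<mu>)" and N: "msupp \<mu> \<noteq> {}"
  shows "G_bplus \<mu> = (SUP z\<in>{supp_sup \<mu><..}. ereal (stieltjes \<mu> z))"
proof -
  define b where "b = supp_sup \<mu>"
  define L where "L = (SUP z\<in>{b<..}. ereal (stieltjes \<mu> z))"
  have mono: "stieltjes \<mu> z2 \<le> stieltjes \<mu> z1" if "b < z1" "z1 \<le> z2" for z1 z2
    using stj_mono(1)[OF P S C N, of z1 z2] that unfolding b_def by auto
  have "((\<lambda>z. ereal (stieltjes \<mu> z)) \<longlongrightarrow> L) (at_right b)"
  proof (rule order_tendstoI)
    fix y assume "y < L"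
    then obtain z0 where z0: "b < z0" "y < ereal (stieltjes \<mu> z0)" unfolding L_def less_SUP_iff by auto
    have "eventually (\<lambda>z. z \<in> {b<..<z0}) (at_right b)" by (rule eventually_at_right_real[OF z0(1)])
    then show "eventually (\<lambda>z. y < ereal (stieltjes \<mu> z)) (at_right b)"
    proof (rule eventually_mono)
      fix z assume "z \<in> {b<..<z0}"
      then have "stieltjes \<mu> z0 \<le> stieltjes \<mu> z" using mono[of z z0] by auto
      then show "y < ereal (stieltjes \<mu> z)" using z0(2) by (meson ereal_less_eq(3) less_le_trans)
    qed
  next
    fix y assume "L < y"
    have "eventually (\<lambda>z. b < z) (at_right b)" by (rule eventually_at_right_less)
    then show "eventually (\<lambda>z. ereal (stieltjes \<mu> z) < y) (at_right b)"
    proof (rule eventually_mono)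
      fix z assume "b < z"
      then have "ereal (stieltjes \<mu> z) \<le> L" unfolding L_def by (intro SUP_upper) auto
      then show "ereal (stieltjes \<mu> z) < y" using \<open>L < y\<close> by simp
    qed
  qed
  then have "Lim (at_right b) (\<lambda>z. ereal (stieltjes \<mu> z)) = L" by (intro tendsto_Lim) auto
  then show ?thesis unfolding G_bplus_def L_def b_def .
qed



lemma fc_prop:
  fixes \<mu> :: "real measure"
  assumes m0: "moment \<mu> 0 = 1"
  shows "free_cumulant \<mu> 0 = 0 \<and>
    Abs_fps (free_cumulant \<mu>) oo (fps_X * Abs_fps (moment \<mu>)) = Abs_fps (moment \<mu>) - 1"
proof -
  let ?Q = "\<lambda>\<kappa>. \<kappa> 0 = 0 \<and> (\<forall>n\<ge>1. moment \<mu> n = (\<Sum>s=1..n. \<kappa> s * fps_nth (moment_fps \<mu> ^ s) (n - s)))"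
  let ?R = "\<lambda>\<kappa>. \<kappa> 0 = 0 \<and> Abs_fps \<kappa> oo (fps_X * Abs_fps (moment \<mu>)) = Abs_fps (moment \<mu>) - 1"
  have eq: "?Q \<kappa> \<longleftrightarrow> ?R \<kappa>" for \<kappa>
    using rel_iff[of \<kappa> "moment \<mu>", OF _ m0] unfolding moment_fps_def by blast
  have "\<exists>!\<kappa>. ?Q \<kappa>" using rel_unique_exists[of "moment \<mu>", OF m0] unfolding eq .
  then have "?Q (free_cumulant \<mu>)" unfolding free_cumulant_def by (rule theI')
  then show ?thesis using eq by blast
qed

lemma key:
  fixes \<mu> :: "real measure"
  assumes P: "prob_space \<mu>" and S: "sets \<mu> = sets borel" and C: "compact (msupp \<mu>)" and N: "msupp \<mu> \<noteq> {}"
    and knn: "\<forall>i\<ge>2. free_cumulant \<mu> i \<ge> 0"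
    and u: "0 < u" "ereal u < G_bplus \<mu>"
  shows "summable (\<lambda>i. real (i+1) * free_cumulant \<mu> (i+2) * u^(i+2))"
    "(\<Sum>i. real (i+1) * free_cumulant \<mu> (i+2) * u^(i+2)) < 1"
proof -
  interpret prob_space \<mu> by (rule P)
  define b where "b = supp_sup \<mu>"
  define c where "c = - Inf (msupp \<mu>)"
  define \<kappa> where "\<kappa> = free_cumulant \<mu>"
  have m0: "moment \<mu> 0 = 1" by (simp add: moment_def prob_space)
  note fc = fc_prop[OF m0, folded \<kappa>_def]
  define Mf' where "Mf' = Geo c * (Abs_fps (moment \<mu>) oo Tsh c)"
  define \<kappa>' where "\<kappa>' = fps_nth (Abs_fps \<kappa> + fps_const c * fps_X)"
  define m' where "m' n = (\<integral>x. (x + c)^n \<partial>\<mu>)" for n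
  have Mf'_eq: "Mf' = Abs_fps m'"
    using mom_shift[OF int_pow[OF P S C N]] unfolding Mf'_def m'_def by (intro fps_ext) simp
  have rel': "Abs_fps \<kappa>' oo (fps_X * Abs_fps m') = Abs_fps m' - 1"
    using shift_rel[of \<kappa> "Abs_fps (moment \<mu>)" c] fc unfolding Mf'_eq[symmetric] Mf'_def \<kappa>'_def
    by (simp add: fps_nth_inverse)
  have m'0: "m' 0 = 1" unfolding m'_def by (simp add: prob_space)
  have ae: "AE x in \<mu>. 0 \<le> x + c" using supp_bounds(1)[OF S C N] by eventually_elim (auto simp: c_def)
  have m'nn: "0 \<le> m' n" for n unfolding m'_def
    by (rule integral_nonneg_AE) (use ae in \<open>eventually_elim, auto\<close>)
  have k'0: "\<kappa>' 0 = 0" using fc unfolding \<kappa>'_def by simp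
  have k'2: "\<kappa>' (i+2) = \<kappa> (i+2)" for i unfolding \<kappa>'_def by simp
  have k'1: "\<kappa>' 1 = m' 1"
  proof -
    have "\<forall>n\<ge>1. m' n = (\<Sum>s=1..n. \<kappa>' s * fps_nth (Abs_fps m' ^ s) (n - s))"
      using rel_iff[of \<kappa>' m', OF k'0 m'0] rel' by blast
    then show ?thesis using m'0 by auto
  qed
  have k'nn: "0 \<le> \<kappa>' n" for n
  proof -
    consider "n = 0" | "n = 1" | i where "n = i + 2" by (metis One_nat_def add_2_eq_Suc' not0_implies_Suc)
    then show ?thesis
    proof cases
      case 1 then show ?thesis using k'0 by simp
    next
      case 2 then show ?thesis using k'1 m'nn by simp
    next
      case 3 then show ?thesis using k'2 knn unfolding \<kappa>_def by simp
    qed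
  qed
  have "ereal u < (SUP z\<in>{b<..}. ereal (stieltjes \<mu> z))" using u(2) Gbplus_eq[OF P S C N] unfolding b_def by simp
  then obtain z where z: "b < z" "u < stieltjes \<mu> z" unfolding less_SUP_iff by auto
  define z2 where "z2 = (b + z) / 2"
  have z2: "b < z2" "z2 < z" using z unfolding z2_def by auto
  have Bc: "0 \<le> b + c" using supp_bounds(2)[OF S C N] unfolding b_def c_def by simp
  define w1 where "w1 = 1 / (z + c)"
  define w2 where "w2 = 1 / (z2 + c)"
  have w: "0 < w1" "w1 < w2" using z z2 Bc unfolding w1_def w2_def by (auto simp: field_simps)
  have sm2: "summable (\<lambda>n. m' n * w2^n)"
    using stj_series(1)[OF P S C N, of z2] z2 unfolding m'_def w2_def c_def b_def by simp
  have G1: "stieltjes \<mu> z = w1 * (\<Sum>n. m' n * w1^n)"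
    using stj_series(2)[OF P S C N, of z] z unfolding m'_def w1_def c_def b_def by simp
  note co = core[of m' \<kappa>' w1 w2, OF m'nn k'nn m'0 k'0 rel' w sm2]
  define \<phi> where "\<phi> = w1 * (\<Sum>n. m' n * w1^n)"
  have uphi: "u \<le> \<phi>" using z G1 unfolding \<phi>_def by simp
  have le: "real (i+1) * \<kappa> (i+2) * u^(i+2) \<le> real (i+1) * \<kappa>' (i+2) * \<phi>^(i+2)" for i
    unfolding k'2 using k'nn[of "i+2"] u(1) uphi unfolding k'2
    by (intro mult_left_mono power_mono) auto
  have nn: "0 \<le> real (i+1) * \<kappa> (i+2) * u^(i+2)" for i using k'nn[of "i+2"] u(1) unfolding k'2 by auto
  have s: "summable (\<lambda>i. real (i+1) * \<kappa> (i+2) * u^(i+2))"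
    by (rule summable_comparison_test'[OF co(1)[folded \<phi>_def]]) (use le nn in auto)
  then show "summable (\<lambda>i. real (i+1) * free_cumulant \<mu> (i+2) * u^(i+2))" unfolding \<kappa>_def .
  have "(\<Sum>i. real (i+1) * \<kappa> (i+2) * u^(i+2)) \<le> (\<Sum>i. real (i+1) * \<kappa>' (i+2) * \<phi>^(i+2))"
    by (rule suminf_le[OF le s co(1)[folded \<phi>_def]])
  also have "\<dots> < 1" using co(2)[folded \<phi>_def] .
  finally show "(\<Sum>i. real (i+1) * free_cumulant \<mu> (i+2) * u^(i+2)) < 1" unfolding \<kappa>_def .
qed



lemma pair_finite_bound:
  fixes f :: "nat \<Rightarrow> real"
  assumes nn: "\<And>n. 0 \<le> f n" and sm: "summable (\<lambda>n. real (n+1) * f n)"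
    and F: "finite F"
  shows "(\<Sum>(j,k)\<in>F. f (j+k)) \<le> (\<Sum>n. real (n+1) * f n)"
proof -
  define N where "N = Suc (Max ((\<lambda>(j,k). j+k) ` F))"
  have img: "(\<lambda>(j,k). j+k) ` F \<subseteq> {..<N}"
  proof (rule subsetI)
    fix n assume n: "n \<in> (\<lambda>(j,k). j+k) ` F"
    then have "n \<le> Max ((\<lambda>(j,k). j+k) ` F)" using F by (intro Max_ge) auto
    then show "n \<in> {..<N}" unfolding N_def by simp
  qed
  have "(\<Sum>(j,k)\<in>F. f (j+k)) = (\<Sum>n<N. \<Sum>p\<in>{p. p \<in> F \<and> (\<lambda>(j,k). j+k) p = n}. (\<lambda>(j,k). f (j+k)) p)"
    by (rule sum.group[symmetric, OF F _ img]) simp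
  also have "\<dots> \<le> (\<Sum>n<N. real (n+1) * f n)"
  proof (rule sum_mono)
    fix n assume "n \<in> {..<N}"
    let ?A = "{p. p \<in> F \<and> (\<lambda>(j,k). j+k) p = n}"
    have sub: "?A \<subseteq> (\<lambda>j. (j, n - j)) ` {..n}" by (auto simp: image_iff)
    have "card ?A \<le> card ((\<lambda>j. (j, n - j)) ` {..n})" by (rule card_mono[OF _ sub]) simp
    also have "\<dots> \<le> n + 1" using card_image_le[of "{..n}" "\<lambda>j. (j, n - j)"] by simp
    finally have c: "card ?A \<le> n + 1" .
    have "(\<Sum>p\<in>?A. (\<lambda>(j,k). f (j+k)) p) = (\<Sum>p\<in>?A. f n)" by (intro sum.cong) auto
    also have "\<dots> = real (card ?A) * f n" by simp
    also have "\<dots> \<le> real (n+1) * f n" using c nn[of n] by (intro mult_right_mono) auto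
    finally show "(\<Sum>p\<in>?A. (\<lambda>(j,k). f (j+k)) p) \<le> real (n+1) * f n" .
  qed
  also have "\<dots> \<le> (\<Sum>n. real (n+1) * f n)"
    by (rule sum_le_suminf[OF sm]) (auto intro!: mult_nonneg_nonneg nn)
  finally show ?thesis .
qed

lemma pair_summable:
  fixes f :: "nat \<Rightarrow> real"
  assumes nn: "\<And>n. 0 \<le> f n" and sm: "summable (\<lambda>n. real (n+1) * f n)"
  shows "(\<lambda>(j,k). f (j+k)) summable_on UNIV"
    "infsum (\<lambda>(j,k). f (j+k)) UNIV \<le> (\<Sum>n. real (n+1) * f n)"
proof -
  show s: "(\<lambda>(j,k). f (j+k)) summable_on UNIV"
  proof (rule nonneg_bdd_above_summable_on)
    show "bdd_above (sum (\<lambda>(j,k). f (j+k)) ` {F. F \<subseteq> UNIV \<and> finite F})"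
      using pair_finite_bound[OF nn sm] by (intro bdd_aboveI2) auto
  qed (auto intro: nn)
  show "infsum (\<lambda>(j,k). f (j+k)) UNIV \<le> (\<Sum>n. real (n+1) * f n)"
    by (rule infsum_le_finite_sums[OF s]) (use pair_finite_bound[OF nn sm] in auto)
qed



lemma xnorm_upper:
  assumes bd: "\<And>s t. s \<le> 0 \<Longrightarrow> t \<le> 0 \<Longrightarrow> \<bar>z s t\<bar> \<le> Bd" and xi: "0 < \<xi>" "\<xi> \<le> 1"
    and st: "s \<le> 0" "t \<le> 0"
  shows "\<xi> ^ nat (max \<bar>s\<bar> \<bar>t\<bar>) * \<bar>z s t\<bar> \<le> xnorm \<xi> z"
  unfolding xnorm_def
proof (rule cSUP_upper2[where x="(s,t)"])
  show "bdd_above ((\<lambda>p. \<xi> ^ nat (max \<bar>fst p\<bar> \<bar>snd p\<bar>) * \<bar>z (fst p) (snd p)\<bar>) ` {(s, t). s \<le> 0 \<and> t \<le> 0})"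
  proof (rule bdd_aboveI2)
    fix p assume "p \<in> {(s, t). (s::int) \<le> 0 \<and> (t::int) \<le> 0}"
    then have "\<bar>z (fst p) (snd p)\<bar> \<le> Bd" using bd by auto
    moreover have "\<xi> ^ nat (max \<bar>fst p\<bar> \<bar>snd p\<bar>) \<le> 1" using xi by (simp add: power_le_one)
    moreover have "0 \<le> \<xi> ^ nat (max \<bar>fst p\<bar> \<bar>snd p\<bar>)" using xi by simp
    ultimately show "\<xi> ^ nat (max \<bar>fst p\<bar> \<bar>snd p\<bar>) * \<bar>z (fst p) (snd p)\<bar> \<le> Bd"
      by (metis abs_ge_zero mult_left_le_one_le order.trans)
  qed
qed (use st in auto)

lemma xnorm_least:
  assumes "\<And>s t. s \<le> 0 \<Longrightarrow> t \<le> 0 \<Longrightarrow> \<xi> ^ nat (max \<bar>s\<bar> \<bar>t\<bar>) * \<bar>z s t\<bar> \<le> R"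
  shows "xnorm \<xi> z \<le> R"
  unfolding xnorm_def by (rule cSUP_least) (use assms in auto)

lemma hSigma_lip:
  fixes \<mu> :: "real measure" and \<alpha> \<xi> a :: real
  assumes \<alpha>: "0 < \<alpha>" and xi: "0 < \<xi>" "\<xi> < 1"
    and knn: "\<forall>i\<ge>2. free_cumulant \<mu> i \<ge> 0"
    and sm: "summable (\<lambda>n. real (n+1) * (free_cumulant \<mu> (n+2) * (1 / (\<xi> * \<alpha>))^(n+2)))"
    and x: "x \<in> XI {-a..a}" and y: "y \<in> XI {-a..a}"
  shows "xnorm \<xi> (\<lambda>s t. hSigma \<mu> \<alpha> x s t - hSigma \<mu> \<alpha> y s t)
    \<le> (\<Sum>n. real (n+1) * (free_cumulant \<mu> (n+2) * (1 / (\<xi> * \<alpha>))^(n+2))) * xnorm \<xi> (\<lambda>s t. x s t - y s t)"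
proof -
  define \<kappa> where "\<kappa> = free_cumulant \<mu>"
  define u where "u = 1 / (\<xi> * \<alpha>)"
  define v where "v = 1 / \<alpha>"
  define K0 where "K0 = \<alpha>\<^sup>2 * rho_sq \<mu> \<alpha>"
  define fu where "fu n = \<kappa> (n+2) * u^(n+2)" for n
  define S where "S = (\<Sum>n. real (n+1) * fu n)"
  define D where "D = xnorm \<xi> (\<lambda>s t. x s t - y s t)"
  have u0: "0 < u" and v0: "0 < v" using \<alpha> xi unfolding u_def v_def by auto
  have vu: "v = u * \<xi>" unfolding u_def v_def using xi \<alpha> by (simp add: field_simps)
  have vle: "v \<le> u" unfolding vu using u0 xi by (simp add: mult_left_le_one_le less_imp_le)
  have knn': "0 \<le> \<kappa> (n+2)" for n using knn unfolding \<kappa>_def by simp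
  have fnn: "0 \<le> fu n" for n unfolding fu_def using knn'[of n] u0 by simp
  have smf: "summable (\<lambda>n. real (n+1) * fu n)" using sm unfolding fu_def \<kappa>_def u_def .
  note PS = pair_summable[OF fnn smf, folded S_def]
  have xa: "x s t \<in> {-a..a}" "y s t \<in> {-a..a}" if "s \<le> 0" "t \<le> 0" for s t
    using x y that unfolding XI_def by auto
  have a0: "0 \<le> a" using xa[of 0 0] by auto
  define g where "g j k = \<kappa> (j+k+2) * v^(j+k+2)" for j k :: nat
  have g_le: "\<bar>g j k\<bar> \<le> fu (j+k)" for j k
  proof -
    have p: "v^(j+k+2) \<le> u^(j+k+2)" using vle v0 by (intro power_mono) auto
    have "\<bar>g j k\<bar> = \<kappa> (j+k+2) * v^(j+k+2)" unfolding g_def using knn'[of "j+k"] v0 by (simp add: abs_mult)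
    also have "\<dots> \<le> \<kappa> (j+k+2) * u^(j+k+2)" using p knn'[of "j+k"] by (rule mult_left_mono)
    finally show ?thesis unfolding fu_def by (simp add: add.assoc)
  qed
  have hS: "hSigma \<mu> \<alpha> z s t = infsum (\<lambda>(j,k). g j k * (K0 + z (s - int j) (t - int k))) UNIV" for z s t
    unfolding hSigma_def g_def K0_def \<kappa>_def v_def by (simp add: add.commute add.left_commute)
  have summ: "(\<lambda>p. norm ((\<lambda>(j,k). g j k * (C + z (s - int j) (t - int k))) p)) summable_on UNIV"
    if "s \<le> 0" "t \<le> 0" "\<And>s t. s \<le> 0 \<Longrightarrow> t \<le> 0 \<Longrightarrow> \<bar>z s t\<bar> \<le> Bd" for z s t C Bd
  proof -
    have "(\<lambda>(j,k). fu (j+k) * (\<bar>C\<bar> + Bd)) summable_on UNIV"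
      using summable_on_cmult_left[OF PS(1), of "\<bar>C\<bar> + Bd"] by (simp add: case_prod_unfold)
    then have ab: "(\<lambda>p. norm ((\<lambda>(j,k). fu (j+k) * (\<bar>C\<bar> + Bd)) p)) summable_on UNIV"
      using fnn that(3)[of 0 0] by (subst summable_on_cong[where g="\<lambda>(j,k). fu (j+k) * (\<bar>C\<bar> + Bd)"]) (auto simp: abs_mult)
    show "(\<lambda>p. norm ((\<lambda>(j,k). g j k * (C + z (s - int j) (t - int k))) p)) summable_on UNIV"
    proof (rule Infinite_Sum.abs_summable_on_comparison_test[OF ab])
      fix p :: "nat \<times> nat" obtain j k where p: "p = (j,k)" by (cases p)
      have "\<bar>z (s - int j) (t - int k)\<bar> \<le> Bd" using that by auto
      then have "\<bar>C + z (s - int j) (t - int k)\<bar> \<le> \<bar>C\<bar> + Bd" by linarith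
      then have "\<bar>g j k\<bar> * \<bar>C + z (s - int j) (t - int k)\<bar> \<le> fu (j+k) * (\<bar>C\<bar> + Bd)"
        using g_le[of j k] fnn[of "j+k"] by (intro mult_mono) auto
      moreover have "0 \<le> fu (j+k) * (\<bar>C\<bar> + Bd)" using fnn[of "j+k"] that(3)[of 0 0] by auto
      ultimately show "norm ((\<lambda>(j,k). g j k * (C + z (s - int j) (t - int k))) p) \<le> norm ((\<lambda>(j,k). fu (j+k) * (\<bar>C\<bar> + Bd)) p)"
        unfolding p by (simp only: real_norm_def case_prod_conv abs_mult[symmetric] abs_of_nonneg)
    qed
  qed
  have bx: "\<bar>x s t\<bar> \<le> a" "\<bar>y s t\<bar> \<le> a" "\<bar>x s t - y s t\<bar> \<le> 2 * a" if "s \<le> 0" "t \<le> 0" for s t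
    using xa[OF that] by auto
  have Dup: "\<xi> ^ nat (max \<bar>s\<bar> \<bar>t\<bar>) * \<bar>x s t - y s t\<bar> \<le> D" if "s \<le> 0" "t \<le> 0" for s t
    unfolding D_def by (rule xnorm_upper[OF _ xi(1) _ that, of _ "2 * a"]) (use bx xi in auto)
  have D0: "0 \<le> D" using Dup[of 0 0] by (smt (verit) mult_nonneg_nonneg abs_ge_zero xi(1) zero_le_power)
  have main: "\<xi> ^ nat (max \<bar>s\<bar> \<bar>t\<bar>) * \<bar>hSigma \<mu> \<alpha> x s t - hSigma \<mu> \<alpha> y s t\<bar> \<le> S * D"
    if st: "s \<le> 0" "t \<le> 0" for s t
  proof -
    define M where "M = nat (max \<bar>s\<bar> \<bar>t\<bar>)"
    define tx where "tx = (\<lambda>(j,k). g j k * (K0 + x (s - int j) (t - int k)))"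
    define ty where "ty = (\<lambda>(j,k). g j k * (K0 + y (s - int j) (t - int k)))"
    define d where "d = (\<lambda>(j,k). g j k * (0 + (\<lambda>s t. x s t - y s t) (s - int j) (t - int k)))"
    have sy: "ty summable_on UNIV" unfolding ty_def
      by (rule Infinite_Sum.abs_summable_summable, rule summ[OF st, of y a]) (use bx in auto)
    have dn: "(\<lambda>p. norm (d p)) summable_on UNIV" unfolding d_def
      by (rule summ[OF st, of _ "2 * a"]) (use bx in auto)
    have sd: "d summable_on UNIV" by (rule Infinite_Sum.abs_summable_summable[OF dn])
    have txe: "tx = (\<lambda>p. ty p + d p)" unfolding tx_def ty_def d_def by (auto simp: algebra_simps)
    have diff: "hSigma \<mu> \<alpha> x s t - hSigma \<mu> \<alpha> y s t = infsum d UNIV"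
      unfolding hS tx_def[symmetric] ty_def[symmetric] txe infsum_add[OF sy sd] by simp
    have dle: "norm (d p) \<le> fu (fst p + snd p) * (D / \<xi>^M)" for p
    proof -
      obtain j k where p: "p = (j,k)" by (cases p)
      define n where "n = j + k + 2"
      have s': "s - int j \<le> 0" "t - int k \<le> 0" using st by auto
      define M' where "M' = nat (max \<bar>s - int j\<bar> \<bar>t - int k\<bar>)"
      have MM: "M' \<le> M + n" unfolding M'_def M_def n_def using st by arith
      have gabs: "\<bar>g j k\<bar> = fu (j+k) * \<xi>^n"
        unfolding g_def fu_def n_def vu using knn'[of "j+k"] u0 xi
        by (simp add: abs_mult power_mult_distrib add.assoc)
      have "\<xi>^(M+n) \<le> \<xi>^M'" using MM xi by (intro power_decreasing) auto
      then have "\<xi>^(M+n) * \<bar>x (s - int j) (t - int k) - y (s - int j) (t - int k)\<bar> \<le> D"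
        using Dup[OF s'] unfolding M'_def[symmetric] by (meson abs_ge_zero mult_right_mono order.trans)
      then have e: "\<xi>^n * \<bar>x (s - int j) (t - int k) - y (s - int j) (t - int k)\<bar> \<le> D / \<xi>^M"
        using xi by (simp add: field_simps power_add)
      have "norm (d p) = fu (j+k) * (\<xi>^n * \<bar>x (s - int j) (t - int k) - y (s - int j) (t - int k)\<bar>)"
        unfolding p d_def using gabs by (simp add: abs_mult)
      also have "\<dots> \<le> fu (j+k) * (D / \<xi>^M)" using e fnn[of "j+k"] by (rule mult_left_mono)
      finally show ?thesis unfolding p by simp
    qed
    have s2: "(\<lambda>p. fu (fst p + snd p) * (D / \<xi>^M)) summable_on UNIV"
      using summable_on_cmult_left[OF PS(1), of "D / \<xi>^M"] by (simp add: case_prod_unfold)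
    have "\<bar>infsum d UNIV\<bar> \<le> infsum (\<lambda>p. norm (d p)) UNIV"
      using Infinite_Sum.norm_infsum_bound[OF dn] by simp
    also have "\<dots> \<le> infsum (\<lambda>p. fu (fst p + snd p) * (D / \<xi>^M)) UNIV"
      by (rule infsum_mono[OF dn s2 dle])
    also have "\<dots> = infsum (\<lambda>(j,k). fu (j+k)) UNIV * (D / \<xi>^M)"
      using infsum_cmult_left[OF PS(1), of "D / \<xi>^M"] by (simp add: case_prod_unfold)
    also have "\<dots> \<le> S * (D / \<xi>^M)"
      using PS(2) D0 xi by (intro mult_right_mono) auto
    finally have "\<bar>infsum d UNIV\<bar> \<le> S * (D / \<xi>^M)" .
    then have "\<xi>^M * \<bar>infsum d UNIV\<bar> \<le> \<xi>^M * (S * (D / \<xi>^M))"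
      using xi by (intro mult_left_mono) auto
    also have "\<dots> = S * D" using xi by simp
    finally show ?thesis unfolding diff M_def .
  qed
  have "xnorm \<xi> (\<lambda>s t. hSigma \<mu> \<alpha> x s t - hSigma \<mu> \<alpha> y s t) \<le> S * D"
    by (rule xnorm_least) (use main in auto)
  then show ?thesis unfolding S_def D_def fu_def \<kappa>_def u_def .
qed



lemma stj_pos:
  fixes \<mu> :: "real measure"
  assumes P: "prob_space \<mu>" and S: "sets \<mu> = sets borel" and C: "compact (msupp \<mu>)" and N: "msupp \<mu> \<noteq> {}"
    and z: "z > supp_sup \<mu>"
  shows "0 < stieltjes \<mu> z"
proof -
  interpret prob_space \<mu> by (rule P)
  define c where "c = - Inf (msupp \<mu>)"
  define w where "w = 1 / (z + c)"
  define m' where "m' n = (\<integral>x. (x + c)^n \<partial>\<mu>)" for n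
  have Bc: "0 \<le> supp_sup \<mu> + c" using supp_bounds(2)[OF S C N] unfolding c_def by simp
  have w0: "0 < w" using z Bc unfolding w_def by simp
  have ae: "AE x in \<mu>. 0 \<le> x + c" using supp_bounds(1)[OF S C N] by eventually_elim (auto simp: c_def)
  have m'nn: "0 \<le> m' n" for n unfolding m'_def
    by (rule integral_nonneg_AE) (use ae in \<open>eventually_elim, auto\<close>)
  have sm: "summable (\<lambda>n. m' n * w^n)" using stj_series(1)[OF P S C N z] unfolding m'_def w_def c_def .
  have eq: "stieltjes \<mu> z = w * (\<Sum>n. m' n * w^n)" using stj_series(2)[OF P S C N z] unfolding m'_def w_def c_def .
  have "(\<Sum>n<1. m' n * w^n) \<le> (\<Sum>n. m' n * w^n)"
    by (rule sum_le_suminf[OF sm]) (use m'nn w0 in auto)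
  then have "1 \<le> (\<Sum>n. m' n * w^n)" unfolding m'_def by (simp add: prob_space)
  then show ?thesis unfolding eq using w0 by (simp add: mult_pos_pos)
qed

theorem mainTheorem6:
  fixes \<mu> :: "real measure" and \<alpha> \<xi> a :: real
  assumes "prob_space \<mu>" and "sets \<mu> = sets borel"
    and "compact (msupp \<mu>)" and "msupp \<mu> \<noteq> {}"
    and "\<alpha> > 0"
    and "\<forall>i\<ge>2. free_cumulant \<mu> i \<ge> 0"
    and "\<xi> < 1" and "\<alpha> * \<xi> > alpha_s \<mu>"
    and "hSigma \<mu> \<alpha> ` XI {-a..a} \<subseteq> XI {-a..a}"
  shows "(\<forall>x\<in>XI {-a..a}. \<forall>y\<in>XI {-a..a}.
            xnorm \<xi> (\<lambda>s t. hSigma \<mu> \<alpha> x s t - hSigma \<mu> \<alpha> y s t)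
              \<le> Rprime \<mu> (1 / (\<xi> * \<alpha>)) * (1 / (\<xi> * \<alpha>))\<^sup>2 * xnorm \<xi> (\<lambda>s t. x s t - y s t))
         \<and> Rprime \<mu> (1 / (\<xi> * \<alpha>)) * (1 / (\<xi> * \<alpha>))\<^sup>2 < 1"
proof -
  note P = assms(1) and S = assms(2) and C = assms(3) and N = assms(4) and \<alpha> = assms(5)
    and knn = assms(6) and xi1 = assms(7) and as = assms(8)
  define b where "b = supp_sup \<mu>"
  define L where "L = G_bplus \<mu>"
  define u where "u = 1 / (\<xi> * \<alpha>)"
  have Lsup: "L = (SUP z\<in>{b<..}. ereal (stieltjes \<mu> z))" unfolding L_def b_def by (rule Gbplus_eq[OF P S C N])
  have "ereal (stieltjes \<mu> (b + 1)) \<le> L" unfolding Lsup by (intro SUP_upper) auto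
  moreover have "0 < stieltjes \<mu> (b + 1)" by (rule stj_pos[OF P S C N]) (simp add: b_def)
  ultimately have L0: "0 < L" by (meson ereal_less_eq(3) less_le_trans zero_ereal_def ereal_less(2))
  have xi0: "0 < \<xi>" and uL: "ereal u < L"
  proof -
    have "(0 < \<xi>) \<and> ereal u < L"
    proof (cases L)
      case (real l)
      then have l0: "0 < l" using L0 by simp
      have "alpha_s \<mu> = 1 / l" unfolding alpha_s_def L_def[symmetric] real using l0 by (simp add: divide_inverse)
      then have al: "1 / l < \<alpha> * \<xi>" using as by simp
      then have "0 < \<alpha> * \<xi>" using l0 by (smt (verit) divide_pos_pos)
      then have x0: "0 < \<xi>" using \<alpha> by (simp add: zero_less_mult_iff)
      have "u < l" unfolding u_def using al l0 \<alpha> x0 by (simp add: field_simps mult.commute)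
      then show ?thesis using x0 real by simp
    next
      case PInf
      have "alpha_s \<mu> = 0" unfolding alpha_s_def L_def[symmetric] PInf by simp
      then have x0: "0 < \<xi>" using as \<alpha> by (simp add: zero_less_mult_iff)
      then show ?thesis using PInf by simp
    next
      case MInf then show ?thesis using L0 by simp
    qed
    then show "0 < \<xi>" "ereal u < L" by auto
  qed
  have u0: "0 < u" unfolding u_def using xi0 \<alpha> by simp
  note K = key[OF P S C N knn u0 uL[unfolded L_def]]
  define \<kappa> where "\<kappa> = free_cumulant \<mu>"
  have Sterm: "real (i+1) * \<kappa> (i+2) * u^i * u\<^sup>2 = real (i+1) * \<kappa> (i+2) * u^(i+2)" for i
    by (simp add: power_add power2_eq_square)
  have sR: "summable (\<lambda>i. real (i+1) * \<kappa> (i+2) * u^i)"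
  proof -
    have "summable (\<lambda>i. real (i+1) * \<kappa> (i+2) * u^(i+2) / u\<^sup>2)"
      using K(1) unfolding \<kappa>_def by (rule summable_divide)
    moreover have "(\<lambda>i. real (i+1) * \<kappa> (i+2) * u^(i+2) / u\<^sup>2) = (\<lambda>i. real (i+1) * \<kappa> (i+2) * u^i)"
    proof
      fix i
      have E: "real (i+1) * \<kappa> (i+2) * u^(i+2) = (real (i+1) * \<kappa> (i+2) * u^i) * u\<^sup>2" by (rule Sterm[symmetric])
      show "real (i+1) * \<kappa> (i+2) * u^(i+2) / u\<^sup>2 = real (i+1) * \<kappa> (i+2) * u^i"
        using u0 by (subst E) simp
    qed
    ultimately show ?thesis by metis
  qed
  have Req: "Rprime \<mu> u * u\<^sup>2 = (\<Sum>i. real (i+1) * \<kappa> (i+2) * u^(i+2))"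
    unfolding Rprime_def \<kappa>_def[symmetric] suminf_mult2[OF sR] Sterm ..
  have part2: "Rprime \<mu> u * u\<^sup>2 < 1" unfolding Req \<kappa>_def using K(2) .
  have part1: "xnorm \<xi> (\<lambda>s t. hSigma \<mu> \<alpha> x s t - hSigma \<mu> \<alpha> y s t)
      \<le> Rprime \<mu> u * u\<^sup>2 * xnorm \<xi> (\<lambda>s t. x s t - y s t)"
    if x: "x \<in> XI {-a..a}" and y: "y \<in> XI {-a..a}" for x y
  proof -
    have sm: "summable (\<lambda>n. real (n+1) * (free_cumulant \<mu> (n+2) * u^(n+2)))"
      using K(1) by (simp only: mult.assoc)
    have eq: "(\<Sum>n. real (n+1) * (free_cumulant \<mu> (n+2) * u^(n+2))) = Rprime \<mu> u * u\<^sup>2"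
      unfolding Req \<kappa>_def by (simp only: mult.assoc)
    show ?thesis using hSigma_lip[OF \<alpha> xi0 xi1 knn sm[unfolded u_def] x y, folded u_def] unfolding eq .
  qed
  show ?thesis using part1 part2 unfolding u_def by blast
qed


end
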